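(* For a finite graph $G=(V,E)$ and $z>0$, $$\sup_{\mathbf{x}\in FM(G)}\Phi^B(\mathbf{x};z)=\Phi^B(\mathbf{x}(z);z),$$ where $\mathbf{x}(z)$ is defined from the LABP limits as below.
   Context: $\vec E$: directed edges; $\partial u$: neighbours of $u$ (and, in $\sum_{e\in\partial v}$, the edges incident to $v$); empty sums are $0$. LABP: $m^0_{\vec e}(z)=0$, $m^{t+1}_{u\to v}(z)=z/(1+\sum_{w\in\partial u\setminus v}m^t_{w\to u}(z))$; $Y_{\vec e}(z)=\lim_t m^t_{\vec e}(z)$ (exists); $x_e(z)=Y_{\vec e}(z)Y_{-\vec e}(z)/(z+Y_{\vec e}(z)Y_{-\vec e}(z))$. $FM(G)=\{\mathbf{x}\in\mathbb{R}^E:x_e\ge0,\ \sum_{e\in\partial v}x_e\le1\}$. $\Phi^B(\mathbf{x};z)=(\ln z)\sum_{e\in E}x_e+S^B(\mathbf{x})$ with $S^B(\mathbf{x})=\frac12\sum_{v}\{\sum_{e\in\partial v}(-x_e\ln x_e+(1-x_e)\ln(1-x_e))-2(1-\sum_{e\in\partial v}x_e)\ln(1-\sum_{e\in\partial v}x_e)\}$, $0\ln0=0$. *)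

theory Defs
  imports Complex_Main
begin

definition simple_graph :: "'a set \<Rightarrow> 'a set set \<Rightarrow> bool" where
  "simple_graph V E \<longleftrightarrow> finite V \<and> (\<forall>e\<in>E. e \<subseteq> V \<and> card e = 2)"

definition nbrs :: "'a set set \<Rightarrow> 'a \<Rightarrow> 'a set" where
  "nbrs E u = {w. {u, w} \<in> E}"

definition inc_edges :: "'a set set \<Rightarrow> 'a \<Rightarrow> 'a set set" where
  "inc_edges E v = {e \<in> E. v \<in> e}"

text \<open>LABP messages m^t_{u->v}(z), indexed by directed edge (u,v).\<close>
primrec labp :: "'a set set \<Rightarrow> real \<Rightarrow> nat \<Rightarrow> 'a \<times> 'a \<Rightarrow> real" where
  "labp E z 0 uv = 0"
| "labp E z (Suc t) uv =
     z / (1 + (\<Sum>w \<in> nbrs E (fst uv) - {snd uv}. labp E z t (w, fst uv)))"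

definition labpY :: "'a set set \<Rightarrow> real \<Rightarrow> 'a \<times> 'a \<Rightarrow> real" where
  "labpY E z uv = lim (\<lambda>t. labp E z t uv)"

text \<open>x_e(z) for an (undirected) edge e = {u,v}; symmetric in u,v.\<close>
definition labpx :: "'a set set \<Rightarrow> real \<Rightarrow> 'a set \<Rightarrow> real" where
  "labpx E z e = (let u = (SOME u. u \<in> e); v = (SOME v. v \<in> e \<and> v \<noteq> u);
                      p = labpY E z (u, v) * labpY E z (v, u)
                  in p / (z + p))"

definition FM :: "'a set \<Rightarrow> 'a set set \<Rightarrow> ('a set \<Rightarrow> real) set" where
  "FM V E = {x. (\<forall>e\<in>E. x e \<ge> 0) \<and> (\<forall>v\<in>V. (\<Sum>e\<in>inc_edges E v. x e) \<le> 1)}"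

definition xlnx :: "real \<Rightarrow> real" where
  "xlnx t = (if t = 0 then 0 else t * ln t)"

definition SB :: "'a set \<Rightarrow> 'a set set \<Rightarrow> ('a set \<Rightarrow> real) \<Rightarrow> real" where
  "SB V E x = (1/2) * (\<Sum>v\<in>V.
      (\<Sum>e\<in>inc_edges E v. - xlnx (x e) + xlnx (1 - x e))
      - 2 * xlnx (1 - (\<Sum>e\<in>inc_edges E v. x e)))"

definition PhiB :: "'a set \<Rightarrow> 'a set set \<Rightarrow> ('a set \<Rightarrow> real) \<Rightarrow> real \<Rightarrow> real" where
  "PhiB V E x z = ln z * (\<Sum>e\<in>E. x e) + SB V E x"

end

theory Submission
  imports Defs
begin


lemma gibbs:
  fixes x m :: real
  assumes "0 \<le> x" "0 < m"
  shows "x - m \<le> x * ln x - x * ln m"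
proof (cases "x = 0")
  case True then show ?thesis using assms by simp
next
  case False
  hence xp: "x > 0" using assms by simp
  have "ln (m / x) \<le> m / x - 1" using ln_le_minus_one[of "m/x"] xp assms by simp
  hence "ln m - ln x \<le> m / x - 1" using ln_divide_pos[OF assms(2) xp] by simp
  hence "x * (ln m - ln x) \<le> x * (m / x - 1)" using xp by (simp add: mult_left_mono)
  also have "\<dots> = m - x" using xp by (simp add: field_simps)
  finally show ?thesis by (simp add: algebra_simps)
qed

lemma conv2:
  fixes x y u v :: real
  assumes "0 \<le> x" "0 \<le> y" "0 \<le> u" "0 \<le> v" "u + v = 1"
  shows "(u*x+v*y) * ln (u*x+v*y) \<le> u*(x*ln x) + v*(y*ln y)"
proof (cases "u*x+v*y = 0")
  case True
  hence "u*x = 0" "v*y = 0" using assms by (smt (verit) mult_nonneg_nonneg)+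
  hence "u*(x*ln x) = 0" "v*(y*ln y) = 0" by (simp_all add: mult.assoc[symmetric])
  moreover have "(u*x+v*y)*ln(u*x+v*y) = 0" using True by simp
  ultimately show ?thesis by linarith
next
  case False
  define m where "m = u*x+v*y"
  have mp: "m > 0" using False assms m_def by (smt (verit) mult_nonneg_nonneg)
  have g1: "u*(x - m) \<le> u*(x * ln x - x * ln m)" using gibbs[OF assms(1) mp] assms(3) by (rule mult_left_mono)
  have g2: "v*(y - m) \<le> v*(y * ln y - y * ln m)" using gibbs[OF assms(2) mp] assms(4) by (rule mult_left_mono)
  have g1': "u*x - u*m \<le> u*(x*ln x) - u*(x*ln m)" using g1 by (simp add: right_diff_distrib)
  have g2': "v*y - v*m \<le> v*(y*ln y) - v*(y*ln m)" using g2 by (simp add: right_diff_distrib)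
  have z: "u*x - u*m + (v*y - v*m) = 0"
  proof -
    have "u*x - u*m + (v*y - v*m) = m - (u+v)*m" unfolding m_def by (simp add: algebra_simps)
    thus ?thesis using assms(5) by simp
  qed
  have e: "m*ln m = u*(x*ln m) + v*(y*ln m)" unfolding m_def by (simp add: algebra_simps)
  have "m * ln m \<le> u*(x*ln x) + v*(y*ln y)" using g1' g2' z e by linarith
  then show ?thesis using m_def by simp
qed

definition ph :: "real \<Rightarrow> real" where "ph t = t * ln t"

lemma conv_ph:
  fixes x y t :: real
  assumes "0 \<le> x" "0 \<le> y" "0 \<le> t" "t \<le> 1"
  shows "ph ((1-t)*x + t*y) \<le> (1-t)*ph x + t*ph y"
  using conv2[of x y "1-t" t] assms unfolding ph_def by simp

lemma scale_back: "(S::real) \<noteq> 0 \<Longrightarrow> S*((a/S)*x + (b/S)*y) = a*x+b*y"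
  by (simp add: field_simps)

lemma scale_back2: "(S::real) \<noteq> 0 \<Longrightarrow> S*((1 - a/S)*x + (a/S)*y) = (S-a)*x+a*y"
  by (simp add: field_simps)

lemma pair_ph:
  fixes w1 w2 r1 r2 :: real
  assumes "0 < w1" "0 < w2" "0 \<le> r1" "0 \<le> r2"
  shows "(w1+w2) * ph ((w1*r1+w2*r2)/(w1+w2)) \<le> w1 * ph r1 + w2 * ph r2"
proof -
  define t where "t = w2/(w1+w2)"
  have t: "0 \<le> t" "t \<le> 1" using assms unfolding t_def by auto
  have t1: "1 - t = w1/(w1+w2)" unfolding t_def using assms by (simp add: field_simps)
  have e: "(w1*r1+w2*r2)/(w1+w2) = (1-t)*r1 + t*r2" unfolding t1 unfolding t_def
    by (simp add: add_divide_distrib)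
  have "ph ((w1*r1+w2*r2)/(w1+w2)) \<le> (1-t)*ph r1 + t*ph r2" unfolding e
    using conv_ph t assms by simp
  hence "(w1+w2) * ph ((w1*r1+w2*r2)/(w1+w2)) \<le> (w1+w2) * ((1-t)*ph r1 + t*ph r2)"
    using assms by (simp add: mult_left_mono)
  also have "\<dots> = w1 * ph r1 + w2 * ph r2" unfolding t1 unfolding t_def
    using assms by (intro scale_back) simp
  finally show ?thesis .
qed

lemma popo_core:
  fixes w1 w2 w3 r1 r2 r3 m :: real
  assumes w: "0<w1" "0<w2" "0<w3" "w1+w2+w3 = 1" and r: "0\<le>r1" "0\<le>r2" "0\<le>r3"
    and m: "m = w1*r1+w2*r2+w3*r3" and side: "(m \<le> r1 \<and> m \<le> r2) \<or> (r1 \<le> m \<and> r2 \<le> m)"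
  shows "(w1+w2)*ph((w1*r1+w2*r2)/(w1+w2)) + (w1+w3)*ph((w1*r1+w3*r3)/(w1+w3))
     + (w2+w3)*ph((w2*r2+w3*r3)/(w2+w3)) \<le> w1*ph r1 + w2*ph r2 + w3*ph r3 + ph m"
proof -
  have m0: "0 \<le> m" using m w r by simp
  have H12: "(w1+w2)*ph((w1*r1+w2*r2)/(w1+w2)) \<le> w1*ph r1 + w2*ph r2"
    using pair_ph w r by simp
  have w12: "w1+w2 = 1 - w3" using w by simp
  have "w1*(r1-m) + w2*(r2-m) = (w1*r1+w2*r2) - (w1+w2)*m" by (simp add: algebra_simps)
  also have "\<dots> = (m - w3*r3) - (1-w3)*m" using m w12 by simp
  also have "\<dots> = w3*(m-r3)" by (simp add: algebra_simps)
  finally have key: "w1*(r1-m) + w2*(r2-m) = w3*(m - r3)" .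
  show ?thesis
  proof (cases "r3 = m")
    case True
    hence "w1*(r1-m) + w2*(r2-m) = 0" using key by simp
    moreover have "(0 \<le> w1*(r1-m) \<and> 0 \<le> w2*(r2-m)) \<or> (w1*(r1-m) \<le> 0 \<and> w2*(r2-m) \<le> 0)"
      using side w by (auto simp: mult_nonneg_nonneg mult_nonneg_nonpos)
    ultimately have "w1*(r1-m) = 0" "w2*(r2-m) = 0" by linarith+
    hence "r1 = m" "r2 = m" using w by auto
    have q: "\<And>a b. a>0 \<Longrightarrow> b>0 \<Longrightarrow> (a*m+b*m)/(a+b) = m"
    proof -
      fix a b :: real assume "a>0" "b>0"
      hence "a+b \<noteq> 0" by simp
      thus "(a*m+b*m)/(a+b) = m" by (simp add: distrib_right[symmetric])
    qed
    have "(w1*r1+w2*r2)/(w1+w2) = m" using q[of w1 w2] w \<open>r1 = m\<close> \<open>r2 = m\<close> by simp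
    moreover have "(w1*r1+w3*r3)/(w1+w3) = m" using q[of w1 w3] w \<open>r1 = m\<close> True by simp
    moreover have "(w2*r2+w3*r3)/(w2+w3) = m" using q[of w2 w3] w \<open>r2 = m\<close> True by simp
    ultimately have "(w1+w2)*ph((w1*r1+w2*r2)/(w1+w2)) + (w1+w3)*ph((w1*r1+w3*r3)/(w1+w3))
     + (w2+w3)*ph((w2*r2+w3*r3)/(w2+w3)) = ((w1+w2+w3)+(w1+w2+w3))*ph m"
      by (simp add: algebra_simps)
    also have "\<dots> = (w1+w2+w3)*ph m + ph m" using w by simp
    also have "\<dots> = w1*ph r1 + w2*ph r2 + w3*ph r3 + ph m"
      using True \<open>r1 = m\<close> \<open>r2 = m\<close> by (simp add: algebra_simps)
    finally show ?thesis by simp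
  next
    case False
    define A where "A = w1*(r1-r3)/(m-r3)"
    define B where "B = w2*(r2-r3)/(m-r3)"
    have "w1*(r1-r3)+w2*(r2-r3) = (w1*r1+w2*r2) - (w1+w2)*r3" by (simp add: algebra_simps)
    also have "\<dots> = (m - w3*r3) - (1-w3)*r3" using m w12 by simp
    also have "\<dots> = m - r3" by (simp add: algebra_simps)
    finally have num: "w1*(r1-r3)+w2*(r2-r3) = m - r3" .
    have AB: "A + B = 1" unfolding A_def B_def using False num
      by (simp add: add_divide_distrib[symmetric])
    have ABb: "0 \<le> A \<and> A \<le> w1+w3 \<and> 0 \<le> B \<and> B \<le> w2+w3"
    proof -
      have w13: "w1+w3 = 1 - w2" and w23: "w2+w3 = 1-w1" using w by simp_all
      have I1: "(w1+w3)*(m-r3) - w1*(r1-r3) = w2*(r2-m)"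
      proof -
        have "(w1+w3)*(m-r3) - w1*(r1-r3) = (w1+w3)*m - (w1*r1+w3*r3)" by (simp add: algebra_simps)
        also have "\<dots> = (1-w2)*m - (m - w2*r2)" using w13 m by simp
        finally show ?thesis by (simp add: algebra_simps)
      qed
      have I2: "(w2+w3)*(m-r3) - w2*(r2-r3) = w1*(r1-m)"
      proof -
        have "(w2+w3)*(m-r3) - w2*(r2-r3) = (w2+w3)*m - (w2*r2+w3*r3)" by (simp add: algebra_simps)
        also have "\<dots> = (1-w1)*m - (m - w1*r1)" using w23 m by simp
        finally show ?thesis by (simp add: algebra_simps)
      qed
      from side show "0 \<le> A \<and> A \<le> w1+w3 \<and> 0 \<le> B \<and> B \<le> w2+w3"
      proof
        assume h: "m \<le> r1 \<and> m \<le> r2"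
        have "0 \<le> w1*(r1-m)" "0 \<le> w2*(r2-m)" using h w by simp_all
        hence "0 \<le> w3*(m-r3)" using key by linarith
        hence dp: "0 < m - r3" using False w by (simp add: zero_le_mult_iff)
        have n1: "0 \<le> w1*(r1-r3)" "0 \<le> w2*(r2-r3)" using h dp w by simp_all
        have "0 \<le> w1*(r1-m)" "0 \<le> w2*(r2-m)" using h w by simp_all
        hence n2: "w1*(r1-r3) \<le> (w1+w3)*(m-r3)" "w2*(r2-r3) \<le> (w2+w3)*(m-r3)"
          using I1 I2 by linarith+
        show ?thesis unfolding A_def B_def using n1 n2 dp
          by (simp add: pos_divide_le_eq)
      next
        assume h: "r1 \<le> m \<and> r2 \<le> m"
        have "w1*(r1-m) \<le> 0" "w2*(r2-m) \<le> 0" using h w by (simp_all add: mult_nonneg_nonpos)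
        hence "w3*(m-r3) \<le> 0" using key by linarith
        hence dp: "m - r3 < 0" using False w by (simp add: mult_le_0_iff)
        have n1: "w1*(r1-r3) \<le> 0" "w2*(r2-r3) \<le> 0" using h dp w by (simp_all add: mult_nonneg_nonpos)
        have "w1*(r1-m) \<le> 0" "w2*(r2-m) \<le> 0" using h w by (simp_all add: mult_nonneg_nonpos)
        hence n2: "(w1+w3)*(m-r3) \<le> w1*(r1-r3)" "(w2+w3)*(m-r3) \<le> w2*(r2-r3)"
          using I1 I2 by linarith+
        show ?thesis unfolding A_def B_def using n1 n2 dp
          by (simp add: neg_divide_le_eq divide_nonpos_neg)
      qed
    qed
    hence A0: "0 \<le> A" and A1: "A \<le> w1+w3"
      and B0: "0 \<le> B" and B1: "B \<le> w2+w3" by auto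
    define t where "t = A/(w1+w3)"
    define s where "s = B/(w2+w3)"
    have t: "0 \<le> t" "t \<le> 1" unfolding t_def using A0 A1 w by auto
    have s: "0 \<le> s" "s \<le> 1" unfolding s_def using B0 B1 w by auto
    have nz: "m - r3 \<noteq> 0" using False by simp
    have Am: "A*(m-r3) = w1*(r1-r3)" unfolding A_def using nz by simp
    have Bm: "B*(m-r3) = w2*(r2-r3)" unfolding B_def using nz by simp
    have e13: "(w1*r1+w3*r3)/(w1+w3) = (1-t)*r3 + t*m"
    proof -
      have "(1-t)*r3 + t*m = r3 + t*(m-r3)" by (simp add: algebra_simps)
      also have "t*(m-r3) = w1*(r1-r3)/(w1+w3)" unfolding t_def using Am by simp
      also have "r3 + w1*(r1-r3)/(w1+w3) = (w1*r1+w3*r3)/(w1+w3)" using w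
        by (simp add: field_simps)
      finally show ?thesis by simp
    qed
    have e23: "(w2*r2+w3*r3)/(w2+w3) = (1-s)*r3 + s*m"
    proof -
      have "(1-s)*r3 + s*m = r3 + s*(m-r3)" by (simp add: algebra_simps)
      also have "s*(m-r3) = w2*(r2-r3)/(w2+w3)" unfolding s_def using Bm by simp
      also have "r3 + w2*(r2-r3)/(w2+w3) = (w2*r2+w3*r3)/(w2+w3)" using w
        by (simp add: field_simps)
      finally show ?thesis by simp
    qed
    have c13: "ph((w1*r1+w3*r3)/(w1+w3)) \<le> (1-t)*ph r3 + t*ph m" unfolding e13
      using conv_ph t r m0 by simp
    have c23: "ph((w2*r2+w3*r3)/(w2+w3)) \<le> (1-s)*ph r3 + s*ph m" unfolding e23
      using conv_ph s r m0 by simp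
    have C13: "(w1+w3)*ph((w1*r1+w3*r3)/(w1+w3)) \<le> (w1+w3-A)*ph r3 + A*ph m"
    proof -
      have "(w1+w3)*ph((w1*r1+w3*r3)/(w1+w3)) \<le> (w1+w3)*((1-t)*ph r3 + t*ph m)"
        using c13 w by (simp add: mult_left_mono)
      also have "\<dots> = (w1+w3-A)*ph r3 + A*ph m" unfolding t_def using w by (intro scale_back2) simp
      finally show ?thesis .
    qed
    have C23: "(w2+w3)*ph((w2*r2+w3*r3)/(w2+w3)) \<le> (w2+w3-B)*ph r3 + B*ph m"
    proof -
      have "(w2+w3)*ph((w2*r2+w3*r3)/(w2+w3)) \<le> (w2+w3)*((1-s)*ph r3 + s*ph m)"
        using c23 w by (simp add: mult_left_mono)
      also have "\<dots> = (w2+w3-B)*ph r3 + B*ph m" unfolding s_def using w by (intro scale_back2) simp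
      finally show ?thesis .
    qed
    have f1: "(w1+w3-A)*ph r3 + (w2+w3-B)*ph r3 = w3*ph r3"
    proof -
      have "(w1+w3-A)*ph r3 + (w2+w3-B)*ph r3 = ((w1+w2+w3) + w3 - (A+B))*ph r3" by (simp add: algebra_simps)
      thus ?thesis using AB w by simp
    qed
    have f2: "A*ph m + B*ph m = ph m" using AB by (metis distrib_right mult_1)
    show ?thesis using H12 C13 C23 f1 f2 by linarith
  qed
qed

lemma popo3:
  fixes w1 w2 w3 r1 r2 r3 m :: real
  assumes w: "0<w1" "0<w2" "0<w3" "w1+w2+w3 = 1" and r: "0\<le>r1" "0\<le>r2" "0\<le>r3"
    and m: "m = w1*r1+w2*r2+w3*r3"
  shows "(w1+w2)*ph((w1*r1+w2*r2)/(w1+w2)) + (w1+w3)*ph((w1*r1+w3*r3)/(w1+w3))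
     + (w2+w3)*ph((w2*r2+w3*r3)/(w2+w3)) \<le> w1*ph r1 + w2*ph r2 + w3*ph r3 + ph m"
proof -
  have "((m \<le> r1 \<and> m \<le> r2) \<or> (r1 \<le> m \<and> r2 \<le> m)) \<or>
        ((m \<le> r1 \<and> m \<le> r3) \<or> (r1 \<le> m \<and> r3 \<le> m)) \<or>
        ((m \<le> r2 \<and> m \<le> r3) \<or> (r2 \<le> m \<and> r3 \<le> m))" by argo
  moreover
  { assume h: "(m \<le> r1 \<and> m \<le> r2) \<or> (r1 \<le> m \<and> r2 \<le> m)"
    have ?thesis using popo_core[OF w r m h] . }
  moreover
  { assume h: "(m \<le> r1 \<and> m \<le> r3) \<or> (r1 \<le> m \<and> r3 \<le> m)"
    have w': "w1+w3+w2 = 1" using w by simp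
    have m': "m = w1*r1+w3*r3+w2*r2" using m by simp
    have "(w1+w3)*ph((w1*r1+w3*r3)/(w1+w3)) + (w1+w2)*ph((w1*r1+w2*r2)/(w1+w2))
     + (w3+w2)*ph((w3*r3+w2*r2)/(w3+w2)) \<le> w1*ph r1 + w3*ph r3 + w2*ph r2 + ph m"
      using popo_core[OF w(1) w(3) w(2) w' r(1) r(3) r(2) m' h] .
    moreover have "w3+w2 = w2+w3" "w3*r3+w2*r2 = w2*r2+w3*r3" by simp_all
    ultimately have ?thesis by simp }
  moreover
  { assume h: "(m \<le> r2 \<and> m \<le> r3) \<or> (r2 \<le> m \<and> r3 \<le> m)"
    have w': "w2+w3+w1 = 1" using w by simp
    have m': "m = w2*r2+w3*r3+w1*r1" using m by simp
    have "(w2+w3)*ph((w2*r2+w3*r3)/(w2+w3)) + (w2+w1)*ph((w2*r2+w1*r1)/(w2+w1))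
     + (w3+w1)*ph((w3*r3+w1*r1)/(w3+w1)) \<le> w2*ph r2 + w3*ph r3 + w1*ph r1 + ph m"
      using popo_core[OF w(2) w(3) w(1) w' r(2) r(3) r(1) m' h] .
    moreover have "w2+w1 = w1+w2" "w2*r2+w1*r1 = w1*r1+w2*r2" "w3+w1 = w1+w3" "w3*r3+w1*r1 = w1*r1+w3*r3" by simp_all
    ultimately have ?thesis by simp }
  ultimately show ?thesis by blast
qed

definition KK :: "real \<Rightarrow> real \<Rightarrow> real" where
  "KK p q = p * ln p - p * ln q"

lemma KK_ph: assumes "0 \<le> p" "0 < q" shows "KK p q = q * ph (p/q)"
proof (cases "p = 0")
  case True then show ?thesis by (simp add: KK_def ph_def)
next
  case False
  hence "p > 0" using assms by simp
  thus ?thesis using assms unfolding KK_def ph_def by (simp add: ln_divide_pos algebra_simps)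
qed

lemma three_point:
  fixes a b e c d f :: real
  assumes "0\<le>a" "0\<le>b" "0\<le>e" "a+b+e=1" "0<c" "0<d" "0\<le>f" "c+d+f=1" "f=0 \<longrightarrow> e=0"
  shows "KK (a+b) (c+d) + KK (a+e) (c+f) + KK (b+e) (d+f) \<le> KK a c + KK b d + KK e f"
proof (cases "f = 0")
  case True
  hence e: "e = 0" using assms by simp
  have "a + b = 1" "c + d = 1" using assms True e by simp_all
  then show ?thesis using True e by (simp add: KK_def)
next
  case False
  hence fp: "0 < f" using assms by simp
  have P: "(c+d)*ph((c*(a/c)+d*(b/d))/(c+d)) + (c+f)*ph((c*(a/c)+f*(e/f))/(c+f))
     + (d+f)*ph((d*(b/d)+f*(e/f))/(d+f)) \<le> c*ph (a/c) + d*ph (b/d) + f*ph (e/f) + ph (c*(a/c)+d*(b/d)+f*(e/f))"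
    by (rule popo3) (use assms fp in auto)
  have s: "c*(a/c) = a" "d*(b/d) = b" "f*(e/f) = e" using assms fp by simp_all
  have "ph 1 = 0" by (simp add: ph_def)
  hence P': "(c+d)*ph((a+b)/(c+d)) + (c+f)*ph((a+e)/(c+f))
     + (d+f)*ph((b+e)/(d+f)) \<le> c*ph (a/c) + d*ph (b/d) + f*ph (e/f)"
    using P assms(4) unfolding s by simp
  show ?thesis using P' assms fp
    by (simp add: KK_ph)
qed

lemma sum_pos_empty: "finite J \<Longrightarrow> \<forall>i\<in>J. 0 < (q i::real) \<Longrightarrow> sum q J = 0 \<Longrightarrow> J = {}"
  using sum_pos[of J q] by force

lemma KL_full:
  fixes I :: "'b set" and p q :: "'b \<Rightarrow> real"
  assumes "finite I" "\<forall>i\<in>I. 0 \<le> p i" "\<forall>i\<in>I. 0 < q i" "sum p I \<le> 1" "sum q I < 1"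
  shows "(\<Sum>i\<in>I. KK (p i) (q i) + KK (1 - p i) (1 - q i)) + KK (1 - sum p I) (1 - sum q I)
           + KK (sum p I) (sum q I)
         \<le> 2*((\<Sum>i\<in>I. KK (p i) (q i)) + KK (1 - sum p I) (1 - sum q I))"
  using assms(1-5)
proof (induction I rule: finite_induct)
  case empty
  then show ?case by (simp add: KK_def)
next
  case (insert j J)
  have pJ: "\<forall>i\<in>J. 0 \<le> p i" "\<forall>i\<in>J. 0 < q i" using insert.prems by auto
  have pj: "0 \<le> p j" "0 < q j" using insert.prems by auto
  have sJ0: "0 \<le> sum p J" "0 \<le> sum q J" using pJ by (auto intro: sum_nonneg less_imp_le)
  have sp: "sum p (insert j J) = p j + sum p J" "sum q (insert j J) = q j + sum q J"
    using insert.hyps by simp_all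
  have h1: "sum p J \<le> 1" "sum q J < 1" using insert.prems(3,4) sp pj by linarith+
  note IH = insert.IH[OF pJ h1]
  have fe0: "sum q J = 0 \<longrightarrow> J = {}"
  proof
    assume "sum q J = 0"
    thus "J = {}" using sum_pos_empty[OF insert.hyps(1) pJ(2)] by simp
  qed
  have fe: "sum q J = 0 \<longrightarrow> sum p J = 0"
  proof
    assume "sum q J = 0"
    hence "J = {}" using sum_pos_empty[OF insert.hyps(1) pJ(2)] by simp
    thus "sum p J = 0" by simp
  qed
  have T: "KK (p j + (1 - (p j + sum p J))) (q j + (1 - (q j + sum q J)))
      + KK (p j + sum p J) (q j + sum q J)
      + KK ((1 - (p j + sum p J)) + sum p J) ((1 - (q j + sum q J)) + sum q J)
      \<le> KK (p j) (q j) + KK (1 - (p j + sum p J)) (1 - (q j + sum q J)) + KK (sum p J) (sum q J)"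
  proof (rule three_point)
    show "0 \<le> 1 - (p j + sum p J)" using insert.prems(3) sp by linarith
    show "0 < 1 - (q j + sum q J)" using insert.prems(4) sp by linarith
    show "sum q J = 0 \<longrightarrow> sum p J = 0" using fe .
  qed (use pj sJ0 in auto)
  have a1: "p j + (1 - (p j + sum p J)) = 1 - sum p J" "q j + (1 - (q j + sum q J)) = 1 - sum q J"
    "(1 - (p j + sum p J)) + sum p J = 1 - p j" "(1 - (q j + sum q J)) + sum q J = 1 - q j" by simp_all
  have T': "KK (1 - sum p J) (1 - sum q J) + KK (p j + sum p J) (q j + sum q J) + KK (1 - p j) (1 - q j)
      \<le> KK (p j) (q j) + KK (1 - (p j + sum p J)) (1 - (q j + sum q J)) + KK (sum p J) (sum q J)"
    using T unfolding a1 .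
  show ?case unfolding sp sum.insert[OF insert.hyps] using IH T' by (smt (verit))
qed

lemma KK_lower: assumes "0 \<le> p" "0 \<le> q" "0 < q \<or> p = 0" shows "p - q \<le> KK p q"
  using assms gibbs[of p q] by (auto simp: KK_def)

lemma lin_aux: "(a::real) - b + c - d \<le> 2*(a - b + (x - y)) \<Longrightarrow> -a + c - 2*x \<le> -b + d - 2*y"
  by (smt (verit))

lemma KL_vertex:
  fixes I :: "'b set" and p q :: "'b \<Rightarrow> real"
  assumes "finite I" "\<forall>i\<in>I. 0 \<le> p i" "\<forall>i\<in>I. 0 < q i" "sum p I \<le> 1" "sum q I < 1"
  shows "(\<Sum>i\<in>I. - (p i * ln (p i)) + (1 - p i) * ln (1 - p i)) - 2 * ((1 - sum p I) * ln (1 - sum p I))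
    \<le> (\<Sum>i\<in>I. - (p i * ln (q i)) + (1 - p i) * ln (1 - q i)) - 2 * ((1 - sum p I) * ln (1 - sum q I))"
proof -
  note F = KL_full[OF assms]
  have s0: "0 \<le> sum p I" using assms(2) by (auto intro: sum_nonneg)
  have q0: "0 \<le> sum q I" using assms(3) by (auto intro: sum_nonneg less_imp_le)
  have z0: "sum q I = 0 \<longrightarrow> I = {}"
  proof
    assume "sum q I = 0"
    thus "I = {}" using sum_pos_empty[OF assms(1) assms(3)] by simp
  qed
  have z: "sum q I = 0 \<longrightarrow> sum p I = 0"
  proof
    assume "sum q I = 0"
    hence "I = {}" using sum_pos_empty[OF assms(1) assms(3)] by simp
    thus "sum p I = 0" by simp
  qed
  have L1: "(1 - sum p I) - (1 - sum q I) \<le> KK (1 - sum p I) (1 - sum q I)"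
    by (rule KK_lower) (use assms(4,5) in auto)
  have L2: "sum p I - sum q I \<le> KK (sum p I) (sum q I)"
    by (rule KK_lower) (use s0 q0 z in auto)
  have F': "(\<Sum>i\<in>I. KK (p i) (q i) + KK (1 - p i) (1 - q i))
         \<le> 2*((\<Sum>i\<in>I. KK (p i) (q i)) + KK (1 - sum p I) (1 - sum q I))"
    using F L1 L2 by linarith
  have e1: "(\<Sum>i\<in>I. KK (p i) (q i) + KK (1 - p i) (1 - q i)) =
     (\<Sum>i\<in>I. p i * ln (p i)) - (\<Sum>i\<in>I. p i * ln (q i)) + (\<Sum>i\<in>I. (1 - p i) * ln (1 - p i)) - (\<Sum>i\<in>I. (1 - p i) * ln (1 - q i))"
    by (simp add: KK_def sum.distrib sum_subtractf)
  have e2: "(\<Sum>i\<in>I. KK (p i) (q i)) = (\<Sum>i\<in>I. p i * ln (p i)) - (\<Sum>i\<in>I. p i * ln (q i))"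
    by (simp add: KK_def sum_subtractf)
  have e3: "(\<Sum>i\<in>I. - (p i * ln (p i)) + (1 - p i) * ln (1 - p i)) = - (\<Sum>i\<in>I. p i * ln (p i)) + (\<Sum>i\<in>I. (1 - p i) * ln (1 - p i))"
    by (simp only: sum.distrib sum_negf)
  have e4: "(\<Sum>i\<in>I. - (p i * ln (q i)) + (1 - p i) * ln (1 - q i)) = - (\<Sum>i\<in>I. p i * ln (q i)) + (\<Sum>i\<in>I. (1 - p i) * ln (1 - q i))"
    by (simp only: sum.distrib sum_negf)
  have F'': "(\<Sum>i\<in>I. p i * ln (p i)) - (\<Sum>i\<in>I. p i * ln (q i)) + (\<Sum>i\<in>I. (1 - p i) * ln (1 - p i)) - (\<Sum>i\<in>I. (1 - p i) * ln (1 - q i))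
     \<le> 2*((\<Sum>i\<in>I. p i * ln (p i)) - (\<Sum>i\<in>I. p i * ln (q i)) + KK (1 - sum p I) (1 - sum q I))"
    using F' by (simp only: e1 e2)
  show ?thesis unfolding e3 e4 by (rule lin_aux[OF F''[unfolded KK_def]])
qed




lemma seq_even_odd:
  assumes E: "eventually (\<lambda>n. P (2 * n)) sequentially" and O: "eventually (\<lambda>n. P (2 * n + 1)) sequentially"
  shows "eventually P sequentially"
proof -
  from E obtain ne where e: "\<And>n. n \<ge> ne \<Longrightarrow> P (2 * n)"
    by (auto simp: eventually_sequentially)
  from O obtain no where o: "\<And>n. n \<ge> no \<Longrightarrow> P (Suc (2 * n))"
    by (auto simp: eventually_sequentially)
  show ?thesis
    unfolding eventually_sequentially
  proof (intro exI allI impI)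
    fix n assume "max (2 * ne) (2 * no + 1) \<le> n" then show "P n"
      by (cases "even n") (auto elim!: evenE oddE intro: e o)
  qed
qed

lemma lim_even_odd:
  assumes "(\<lambda>n. f (2 * n)) \<longlonglongrightarrow> (l :: real)"
      and "(\<lambda>n. f (2 * n + 1)) \<longlonglongrightarrow> l"
  shows "f \<longlonglongrightarrow> l"
  using assms by (auto simp: filterlim_iff intro: seq_even_odd)

definition TT :: "'a set set \<Rightarrow> real \<Rightarrow> ('a \<times> 'a \<Rightarrow> real) \<Rightarrow> 'a \<times> 'a \<Rightarrow> real" where
  "TT E z f uv = z / (1 + (\<Sum>w \<in> nbrs E (fst uv) - {snd uv}. f (w, fst uv)))"

lemma labp_Suc_TT: "labp E z (Suc t) = TT E z (labp E z t)"
  by (rule ext) (simp add: TT_def)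

declare labp.simps(2)[simp del]

locale gr =
  fixes V :: "'a set" and E :: "'a set set" and z :: real
  assumes sg: "simple_graph V E" and zp: "z > 0"
begin

lemma finV: "finite V" using sg by (simp add: simple_graph_def)

lemma edge_sub: "e \<in> E \<Longrightarrow> e \<subseteq> V" and edge_card: "e \<in> E \<Longrightarrow> card e = 2"
  using sg by (auto simp: simple_graph_def)

lemma nbrs_sub: "nbrs E u \<subseteq> V"
  using edge_sub by (auto simp: nbrs_def)

lemma fin_nbrs: "finite (nbrs E u)" using nbrs_sub finV finite_subset by blast

lemma nbrs_sym: "w \<in> nbrs E u \<longleftrightarrow> u \<in> nbrs E w"
  by (simp add: nbrs_def insert_commute)

lemma TT_bounds:
  assumes "\<forall>d. 0 \<le> f d"
  shows "0 < TT E z f uv" "TT E z f uv \<le> z"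
proof -
  have s: "0 \<le> (\<Sum>w \<in> nbrs E (fst uv) - {snd uv}. f (w, fst uv))" using assms by (simp add: sum_nonneg)
  show "0 < TT E z f uv" unfolding TT_def using s zp by simp
  show "TT E z f uv \<le> z" unfolding TT_def using s zp by (simp add: divide_le_eq)  
qed

lemma TT_anti:
  assumes "\<forall>d. 0 \<le> f d" "\<forall>d. f d \<le> g d"
  shows "TT E z g uv \<le> TT E z f uv"
proof -
  let ?S = "nbrs E (fst uv) - {snd uv}"
  have s: "0 \<le> (\<Sum>w \<in> ?S. f (w, fst uv))" using assms by (simp add: sum_nonneg)
  have m: "(\<Sum>w \<in> ?S. f (w, fst uv)) \<le> (\<Sum>w \<in> ?S. g (w, fst uv))" using assms by (simp add: sum_mono)
  show ?thesis unfolding TT_def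
    by (rule divide_left_mono) (use s m zp in auto)
qed

abbreviation "m t \<equiv> labp E z t"

lemma m_bounds: "0 \<le> m t uv \<and> m t uv \<le> z"
proof (induction t arbitrary: uv)
  case 0 then show ?case using zp by simp
next
  case (Suc t)
  have "\<forall>d. 0 \<le> m t d" using Suc by blast
  then show ?case unfolding labp_Suc_TT using TT_bounds[of "m t" uv] by simp
qed

lemma m_nonneg: "\<forall>d. 0 \<le> m t d" using m_bounds by blast

lemma m_even_mono: "\<forall>d. m (2*t) d \<le> m (2*t+2) d"
proof (induction t)
  case 0
  show ?case
  proof
    fix d
    have a: "m (2*0) d = 0" by simp
    have b: "0 \<le> m (2*0+2) d" using m_bounds by blast
    show "m (2*0) d \<le> m (2*0+2) d" using a b by linarith
  qed
next
  case (Suc t)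
  have "\<forall>d. m (2*t+3) d \<le> m (2*t+1) d"
  proof
    fix d show "m (2*t+3) d \<le> m (2*t+1) d"
      using TT_anti[OF m_nonneg Suc.IH, of d] by (simp add: labp_Suc_TT numeral_3_eq_3)
  qed
  hence h: "\<forall>d. m (2*t+2) d \<le> m (2*t+4) d"
  proof -
    assume a: "\<forall>d. m (2*t+3) d \<le> m (2*t+1) d"
    have e1: "m (2*t+2) = TT E z (m (2*t+1))" using labp_Suc_TT[of E z "2*t+1"] by simp
    have e2: "m (2*t+4) = TT E z (m (2*t+3))" using labp_Suc_TT[of E z "2*t+3"] by (simp add: add.commute)
    show ?thesis unfolding e1 e2 using TT_anti[OF m_nonneg a] by blast
  qed
  have q: "2 * Suc t + 2 = 2*t+4" "2 * Suc t = 2*t+2" by simp_all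
  show ?case using h by (metis q)
qed

lemma m_odd_mono: "\<forall>d. m (2*t+3) d \<le> m (2*t+1) d"
proof
  fix d
  have e1: "m (2*t+1) = TT E z (m (2*t))" using labp_Suc_TT[of E z "2*t"] by simp
  have e2: "m (2*t+3) = TT E z (m (2*t+2))" proof -
    have "2*t+3 = Suc (2*t+2)" by simp
    thus ?thesis by (simp only: labp_Suc_TT)
  qed
  show "m (2*t+3) d \<le> m (2*t+1) d" unfolding e1 e2 using TT_anti[OF m_nonneg m_even_mono] by blast
qed

lemma m_ev_od: "\<forall>d. m (2*t) d \<le> m (2*t+1) d"
proof (induction t)
  case 0
  show ?case
  proof
    fix d
    have a: "m (2*0) d = 0" by simp
    have b: "0 \<le> m (2*0+1) d" using m_bounds by blast
    show "m (2*0) d \<le> m (2*0+1) d" using a b by linarith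
  qed
next
  case (Suc t)
  have e1: "m (2*t+2) = TT E z (m (2*t+1))" using labp_Suc_TT[of E z "2*t+1"] by simp
  have e0: "m (2*t+1) = TT E z (m (2*t))" using labp_Suc_TT[of E z "2*t"] by simp
  have e2: "m (2*t+3) = TT E z (m (2*t+2))" proof -
    have "2*t+3 = Suc (2*t+2)" by simp
    thus ?thesis by (simp only: labp_Suc_TT)
  qed
  have h1: "\<forall>d. m (2*t+2) d \<le> m (2*t+1) d"
  proof
    fix d
    have "TT E z (m (2*t+1)) d \<le> TT E z (m (2*t)) d" by (rule TT_anti[OF m_nonneg Suc.IH])
    moreover have "m (2*t+2) d = TT E z (m (2*t+1)) d" "m (2*t+1) d = TT E z (m (2*t)) d"
      using e1 e0 by simp_all
    ultimately show "m (2*t+2) d \<le> m (2*t+1) d" by linarith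
  qed
  have h2: "\<forall>d. m (2*t+2) d \<le> m (2*t+3) d"
  proof
    fix d
    have "TT E z (m (2*t+1)) d \<le> TT E z (m (2*t+2)) d" by (rule TT_anti[OF m_nonneg h1])
    moreover have "m (2*t+2) d = TT E z (m (2*t+1)) d" "m (2*t+3) d = TT E z (m (2*t+2)) d"
      using e1 e2 by simp_all
    ultimately show "m (2*t+2) d \<le> m (2*t+3) d" by linarith
  qed
  have q: "2 * Suc t + 1 = 2*t+3" "2 * Suc t = 2*t+2" by simp_all
  show ?case using h2 by (metis q)
qed

definition "aa d = lim (\<lambda>t. m (2*t) d)"
definition "bb d = lim (\<lambda>t. m (2*t+1) d)"

lemma aa_conv: "(\<lambda>t. m (2*t) d) \<longlonglongrightarrow> aa d"
proof -
  have "incseq (\<lambda>t. m (2*t) d)"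
  proof (rule incseq_SucI)
    fix t
    have "2 * Suc t = 2*t+2" by simp
    thus "m (2*t) d \<le> m (2 * Suc t) d" using m_even_mono by metis
  qed
  moreover have "bdd_above (range (\<lambda>t. m (2*t) d))"
    by (rule bdd_aboveI[of _ z]) (use m_bounds in blast)
  ultimately have "convergent (\<lambda>t. m (2*t) d)" using LIMSEQ_incseq_SUP convergent_def by blast
  thus ?thesis unfolding aa_def by (simp add: convergent_LIMSEQ_iff)
qed

lemma bb_conv: "(\<lambda>t. m (2*t+1) d) \<longlonglongrightarrow> bb d"
proof -
  have "decseq (\<lambda>t. m (2*t+1) d)"
  proof (rule decseq_SucI)
    fix t
    have "2 * Suc t + 1 = 2*t+3" by simp
    thus "m (2 * Suc t + 1) d \<le> m (2*t+1) d" using m_odd_mono by metis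
  qed
  moreover have "bdd_below (range (\<lambda>t. m (2*t+1) d))"
    by (rule bdd_belowI[of _ 0]) (use m_bounds in blast)
  ultimately have "convergent (\<lambda>t. m (2*t+1) d)" using LIMSEQ_decseq_INF convergent_def by blast
  thus ?thesis unfolding bb_def by (simp add: convergent_LIMSEQ_iff)
qed

lemma TT_tendsto:
  assumes "\<And>x. (\<lambda>t. F t x) \<longlonglongrightarrow> g x" "\<forall>x. 0 \<le> g x"
  shows "(\<lambda>t. TT E z (F t) d) \<longlonglongrightarrow> TT E z g d"
proof -
  have s: "0 \<le> (\<Sum>w \<in> nbrs E (fst d) - {snd d}. g (w, fst d))" using assms(2) by (simp add: sum_nonneg)
  show ?thesis unfolding TT_def
    by (intro tendsto_intros assms(1)) (use s in auto)
qed

lemma aa_nonneg: "0 \<le> aa d"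
  by (rule LIMSEQ_le_const[OF aa_conv[of d]]) (use m_bounds in blast)

lemma bb_nonneg: "0 \<le> bb d"
  by (rule LIMSEQ_le_const[OF bb_conv[of d]]) (use m_bounds in blast)

lemma bb_fix: "bb d = TT E z aa d"
proof -
  have "(\<lambda>t. TT E z (m (2*t)) d) \<longlonglongrightarrow> TT E z aa d"
    by (rule TT_tendsto) (use aa_conv aa_nonneg in auto)
  moreover have "(\<lambda>t. TT E z (m (2*t)) d) = (\<lambda>t. m (2*t+1) d)"
  proof (rule ext)
    fix t
    have "2*t+1 = Suc (2*t)" by simp
    thus "TT E z (m (2*t)) d = m (2*t+1) d" by (simp only: labp_Suc_TT)
  qed
  ultimately show ?thesis using bb_conv LIMSEQ_unique by metis
qed

lemma aa_fix: "aa d = TT E z bb d"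
proof -
  have "(\<lambda>t. TT E z (m (2*t+1)) d) \<longlonglongrightarrow> TT E z bb d"
    by (rule TT_tendsto) (use bb_conv bb_nonneg in auto)
  moreover have "(\<lambda>t. TT E z (m (2*t+1)) d) = (\<lambda>t. m (2*(Suc t)) d)"
  proof (rule ext)
    fix t
    have "2*(Suc t) = Suc (2*t+1)" by simp
    thus "TT E z (m (2*t+1)) d = m (2*(Suc t)) d" using labp_Suc_TT[of E z "2*t+1"] by simp
  qed
  moreover have "(\<lambda>t. m (2*(Suc t)) d) \<longlonglongrightarrow> aa d"
    using aa_conv LIMSEQ_Suc[of "\<lambda>t. m (2*t) d"] by blast
  ultimately show ?thesis using LIMSEQ_unique by metis
qed

lemma aa_le_bb: "aa d \<le> bb d"
  by (rule LIMSEQ_le[OF aa_conv bb_conv]) (use m_ev_od in blast)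

lemma aa_pos: "0 < aa d" using aa_fix TT_bounds(1) bb_nonneg by metis

definition "DD = {(u,v). {u,v} \<in> E}"

lemma DD_sub: "DD \<subseteq> V \<times> V" using edge_sub by (auto simp: DD_def)
lemma fin_DD: "finite DD" using DD_sub finV by (meson finite_SigmaI finite_subset)

lemma nbr_DD: "w \<in> nbrs E u \<Longrightarrow> (w, u) \<in> DD"
  by (simp add: nbrs_def DD_def insert_commute)

lemma bb_le_aa: "d \<in> DD \<Longrightarrow> bb d \<le> aa d"
proof -
  assume dD: "d \<in> DD"
  define r where "r = Max ((\<lambda>d. bb d / aa d) ` DD)"
  have ne: "DD \<noteq> {}" using dD by auto
  have "r \<in> (\<lambda>d. bb d / aa d) ` DD" unfolding r_def using fin_DD ne by (intro Max_in) auto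
  then obtain d0 where d0: "d0 \<in> DD" "bb d0 / aa d0 = r" by auto
  have le: "\<And>d. d \<in> DD \<Longrightarrow> bb d \<le> r * aa d"
  proof -
    fix d assume "d \<in> DD"
    hence "bb d / aa d \<le> r" unfolding r_def using fin_DD by (auto intro: Max_ge)
    thus "bb d \<le> r * aa d" using aa_pos[of d] by (simp add: divide_le_eq)
  qed
  have r1: "r \<le> 1"
  proof (rule ccontr)
    assume "\<not> r \<le> 1"
    hence rg: "r > 1" by simp
    obtain u v where uv: "d0 = (u,v)" by fastforce
    define S where "S = nbrs E u - {v}"
    define Sa where "Sa = (\<Sum>w\<in>S. aa (w,u))"
    define Sb where "Sb = (\<Sum>w\<in>S. bb (w,u))"
    have Sa0: "0 \<le> Sa" unfolding Sa_def using aa_nonneg by (simp add: sum_nonneg)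
    have Sb0: "0 \<le> Sb" unfolding Sb_def using bb_nonneg by (simp add: sum_nonneg)
    have "Sb \<le> (\<Sum>w\<in>S. r * aa (w,u))" unfolding Sb_def
      by (rule sum_mono) (use le nbr_DD S_def in auto)
    hence Sbl: "Sb \<le> r * Sa" unfolding Sa_def by (simp add: sum_distrib_left)
    have bd: "bb d0 = z / (1 + Sa)" using bb_fix[of d0] unfolding TT_def uv S_def Sa_def by simp
    have ad: "aa d0 = z / (1 + Sb)" using aa_fix[of d0] unfolding TT_def uv S_def Sb_def by simp
    have hz: "\<And>A B. A \<noteq> 0 \<Longrightarrow> B \<noteq> 0 \<Longrightarrow> (z/A)/(z/B) = B/(A::real)" using zp by (simp add: field_simps)
    have "r = (z / (1 + Sa)) / (z / (1 + Sb))" using d0(2) bd ad by simp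
    also have "\<dots> = (1 + Sb) / (1 + Sa)" by (rule hz) (use Sa0 Sb0 in auto)
    finally have "r = (1 + Sb) / (1 + Sa)" .
    moreover have "1 + Sb < r * (1 + Sa)" using Sbl rg by (simp add: algebra_simps)
    ultimately have "r*(1+Sa) = 1+Sb" "1 + Sb < r * (1 + Sa)" using Sa0 by simp_all
    thus False by linarith
  qed
  have "r * aa d \<le> 1 * aa d" by (rule mult_right_mono) (use r1 aa_pos[of d] in auto)
  thus ?thesis using le[OF dD] by linarith
qed

lemma aa_eq_bb: "aa d = bb d"
proof -
  have "TT E z bb d = TT E z aa d" unfolding TT_def
  proof -
    have "(\<Sum>w\<in>nbrs E (fst d) - {snd d}. bb (w, fst d)) = (\<Sum>w\<in>nbrs E (fst d) - {snd d}. aa (w, fst d))"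
    proof (rule sum.cong)
      fix w assume "w \<in> nbrs E (fst d) - {snd d}"
      hence "(w, fst d) \<in> DD" using nbr_DD by auto
      thus "bb (w, fst d) = aa (w, fst d)" using bb_le_aa aa_le_bb by (meson order_antisym)
    qed simp
    thus "z / (1 + (\<Sum>w\<in>nbrs E (fst d) - {snd d}. bb (w, fst d))) =
          z / (1 + (\<Sum>w\<in>nbrs E (fst d) - {snd d}. aa (w, fst d)))" by simp
  qed
  thus ?thesis using aa_fix bb_fix by simp
qed

lemma m_conv: "(\<lambda>t. m t d) \<longlonglongrightarrow> aa d"
  by (rule lim_even_odd) (use aa_conv bb_conv aa_eq_bb in auto)

lemma Y_eq: "labpY E z d = aa d"
  unfolding labpY_def using m_conv limI by blast

lemma Y_pos: "0 < labpY E z d" using Y_eq aa_pos by simp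

lemma Y_fix: "labpY E z (u,v) = z / (1 + (\<Sum>w \<in> nbrs E u - {v}. labpY E z (w, u)))"
proof -
  have "bb = aa" by (rule ext) (simp add: aa_eq_bb)
  hence "aa (u,v) = TT E z aa (u,v)" using aa_fix by metis
  thus ?thesis unfolding TT_def Y_eq by simp
qed

end



context gr begin

abbreviation "Y \<equiv> labpY E z"
abbreviation "N \<equiv> nbrs E"
definition "Dv v = 1 + (\<Sum>w\<in>N v. Y (w,v))"
abbreviation "xs \<equiv> labpx E z"

lemma finE: "finite E"
proof -
  have "E \<subseteq> Pow V" using edge_sub by auto
  thus ?thesis using finV finite_subset by blast
qed

lemma edge_two: "e \<in> E \<Longrightarrow> \<exists>u w. e = {u,w} \<and> u \<noteq> w"
  using edge_card card_2_iff by metis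

lemma nbrs_ne: "w \<in> N v \<Longrightarrow> w \<noteq> v"
  using edge_card[of "{v,w}"] by (auto simp: nbrs_def)

lemma nbrs_E: "w \<in> N v \<longleftrightarrow> {v,w} \<in> E" by (simp add: nbrs_def)

lemma inc_eq: "inc_edges E v = (\<lambda>w. {v,w}) ` N v"
proof
  show "inc_edges E v \<subseteq> (\<lambda>w. {v,w}) ` N v"
  proof
    fix e assume "e \<in> inc_edges E v"
    hence e: "e \<in> E" "v \<in> e" by (auto simp: inc_edges_def)
    obtain a b where ab: "e = {a,b}" "a \<noteq> b" using edge_two[OF e(1)] by blast
    show "e \<in> (\<lambda>w. {v,w}) ` N v"
    proof (cases "v = a")
      case True
      thus ?thesis using ab e by (auto simp: nbrs_def)
    next
      case False
      hence "v = b" using ab e by auto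
      hence "e = {v,a}" using ab by auto
      thus ?thesis using e by (auto simp: nbrs_def)
    qed
  qed
next
  show "(\<lambda>w. {v,w}) ` N v \<subseteq> inc_edges E v" by (auto simp: nbrs_def inc_edges_def)
qed

lemma inj_nb: "inj_on (\<lambda>w. {v,w}) (N v)"
proof (rule inj_onI)
  fix a b assume "a \<in> N v" "b \<in> N v" "{v,a} = {v,b}"
  thus "a = b" using nbrs_ne by (metis doubleton_eq_iff)
qed

lemma sum_inc: "(\<Sum>e\<in>inc_edges E v. f e) = (\<Sum>w\<in>N v. f {v,w})"
  unfolding inc_eq by (simp add: sum.reindex[OF inj_nb])

lemma fin_inc: "finite (inc_edges E v)" unfolding inc_edges_def using finE by simp

lemma Dv_pos: "Dv v \<ge> 1"
  unfolding Dv_def using Y_pos by (simp add: sum_nonneg less_imp_le)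

lemma YD: assumes "w \<in> N v" shows "Y (v,w) * Dv v = z + Y (v,w) * Y (w,v)"
proof -
  have s: "(\<Sum>u\<in>N v. Y (u,v)) = Y (w,v) + (\<Sum>u\<in>N v - {w}. Y (u,v))"
    using sum.remove[OF fin_nbrs assms] by simp
  have p: "0 \<le> (\<Sum>u\<in>N v - {w}. Y (u,v))" using Y_pos by (simp add: sum_nonneg less_imp_le)
  have "Y (v,w) = z / (1 + (\<Sum>u\<in>N v - {w}. Y (u,v)))" by (rule Y_fix)
  hence "Y (v,w) * (1 + (\<Sum>u\<in>N v - {w}. Y (u,v))) = z" using p by (simp add: field_simps)
  moreover have "Dv v = (1 + (\<Sum>u\<in>N v - {w}. Y (u,v))) + Y (w,v)" unfolding Dv_def using s by simp
  ultimately show ?thesis by (simp add: algebra_simps)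
qed

lemma xs_edge: assumes "{v,w} \<in> E"
  shows "xs {v,w} = Y (v,w) * Y (w,v) / (z + Y (v,w) * Y (w,v))"
proof -
  have vw: "v \<noteq> w" using edge_card[OF assms] by (cases "v = w") auto
  define u0 where "u0 = (SOME u. u \<in> {v,w})"
  have u0: "u0 \<in> {v,w}" unfolding u0_def by (rule someI[of _ v]) simp
  define v0 where "v0 = (SOME x. x \<in> {v,w} \<and> x \<noteq> u0)"
  have "\<exists>x. x \<in> {v,w} \<and> x \<noteq> u0" using vw u0 by auto
  hence v0: "v0 \<in> {v,w} \<and> v0 \<noteq> u0" unfolding v0_def by (rule someI_ex)
  have "(u0 = v \<and> v0 = w) \<or> (u0 = w \<and> v0 = v)" using u0 v0 by auto
  hence P: "Y (u0,v0) * Y (v0,u0) = Y (v,w) * Y (w,v)" by (auto simp: mult.commute)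
  show ?thesis unfolding labpx_def Let_def u0_def[symmetric] v0_def[symmetric] P ..
qed

lemma xs_q: assumes "w \<in> N v" shows "xs {v,w} = Y (w,v) / Dv v"
proof -
  have e: "{v,w} \<in> E" using assms nbrs_E by blast
  have d: "Y (v,w) * Dv v = z + Y (v,w) * Y (w,v)" using YD[OF assms] .
  have pos: "0 < Y (v,w)" "0 < Dv v" "0 < z + Y (v,w) * Y (w,v)"
    using Y_pos[of "(v,w)"] Y_pos[of "(w,v)"] Dv_pos[of v] zp by (simp_all add: add_pos_pos)
  have "xs {v,w} = Y (v,w) * Y (w,v) / (Y (v,w) * Dv v)" using xs_edge[OF e] d by simp
  also have "\<dots> = Y (w,v) / Dv v" using pos by simp
  finally show ?thesis .
qed

lemma xs_pos: assumes "e \<in> E" shows "0 < xs e" "xs e < 1"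
proof -
  obtain u w where uw: "e = {u,w}" "u \<noteq> w" using edge_two[OF assms] by blast
  have P: "0 < Y (u,w) * Y (w,u)" using Y_pos by simp
  show "0 < xs e" unfolding uw using xs_edge[of u w] assms uw P zp by simp
  show "xs e < 1" unfolding uw using xs_edge[of u w] assms uw P zp by simp
qed

lemma Q_eq: "(\<Sum>e\<in>inc_edges E v. xs e) = 1 - 1 / Dv v"
proof -
  have "(\<Sum>e\<in>inc_edges E v. xs e) = (\<Sum>w\<in>N v. Y (w,v) / Dv v)"
    unfolding sum_inc by (rule sum.cong) (simp_all add: xs_q)
  also have "\<dots> = (Dv v - 1) / Dv v" unfolding Dv_def by (simp add: sum_divide_distrib)
  also have "\<dots> = 1 - 1 / Dv v" using Dv_pos[of v] by (simp add: diff_divide_distrib)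
  finally show ?thesis .
qed

end



context gr begin

lemma double_count: "(\<Sum>v\<in>V. \<Sum>e\<in>inc_edges E v. h v e) = (\<Sum>e\<in>E. \<Sum>v\<in>e. h v e)"
proof -
  have "(\<Sum>v\<in>V. \<Sum>e\<in>inc_edges E v. h v e) = (\<Sum>v\<in>V. \<Sum>e\<in>{e. e \<in> E \<and> v \<in> e}. h v e)"
    unfolding inc_edges_def by simp
  also have "\<dots> = (\<Sum>e\<in>E. \<Sum>v\<in>{v. v \<in> V \<and> v \<in> e}. h v e)"
    by (rule sum.swap_restrict[OF finV finE])
  also have "\<dots> = (\<Sum>e\<in>E. \<Sum>v\<in>e. h v e)"
  proof (rule sum.cong)
    fix e assume "e \<in> E"
    hence "{v. v \<in> V \<and> v \<in> e} = e" using edge_sub by auto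
    thus "(\<Sum>v\<in>{v. v \<in> V \<and> v \<in> e}. h v e) = (\<Sum>v\<in>e. h v e)" by simp
  qed simp
  finally show ?thesis .
qed

definition "gv x v = (1/2)*ln z*(\<Sum>e\<in>inc_edges E v. x e)
   + (1/2)*(\<Sum>e\<in>inc_edges E v. - xlnx (x e) + xlnx (1 - x e))
   - xlnx (1 - (\<Sum>e\<in>inc_edges E v. x e))"

lemma Phi_split: "PhiB V E x z = (\<Sum>v\<in>V. gv x v)"
proof -
  have "(\<Sum>v\<in>V. \<Sum>e\<in>inc_edges E v. x e) = (\<Sum>e\<in>E. \<Sum>v\<in>e. x e)" by (rule double_count)
  also have "\<dots> = (\<Sum>e\<in>E. 2 * x e)"
    by (rule sum.cong) (simp_all add: edge_card)
  finally have dc: "(\<Sum>v\<in>V. \<Sum>e\<in>inc_edges E v. x e) = 2 * (\<Sum>e\<in>E. x e)"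
    by (simp add: sum_distrib_left)
  define S where "S v = (\<Sum>e\<in>inc_edges E v. x e)" for v
  define T where "T v = (\<Sum>e\<in>inc_edges E v. - xlnx (x e) + xlnx (1 - x e))" for v
  define X where "X v = xlnx (1 - (\<Sum>e\<in>inc_edges E v. x e))" for v
  have "(\<Sum>v\<in>V. gv x v) = (\<Sum>v\<in>V. (1/2*ln z) * S v + ((1/2)*T v - X v))"
    by (rule sum.cong) (simp_all add: gv_def S_def T_def X_def algebra_simps)
  also have "\<dots> = (1/2*ln z) * (\<Sum>v\<in>V. S v) + (\<Sum>v\<in>V. (1/2)*T v - X v)"
    by (simp add: sum.distrib sum_distrib_left)
  also have "(\<Sum>v\<in>V. S v) = 2 * (\<Sum>e\<in>E. x e)" unfolding S_def by (rule dc)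
  also have "(\<Sum>v\<in>V. (1/2)*T v - X v) = (1/2) * (\<Sum>v\<in>V. T v - 2 * X v)"
    by (simp add: sum_distrib_left right_diff_distrib)
  also have "(1/2*ln z) * (2 * (\<Sum>e\<in>E. x e)) + (1/2) * (\<Sum>v\<in>V. T v - 2 * X v) = PhiB V E x z"
    unfolding PhiB_def SB_def T_def X_def by simp
  finally show ?thesis by simp
qed

definition "Qv v = (\<Sum>e\<in>inc_edges E v. xs e)"
definition "Bv x v = (1/2)*(ln z * (\<Sum>e\<in>inc_edges E v. x e)
   + (\<Sum>e\<in>inc_edges E v. - (x e * ln (xs e)) + (1 - x e) * ln (1 - xs e)))
   - (1 - (\<Sum>e\<in>inc_edges E v. x e)) * ln (1 - Qv v)"

lemma Qv_eq: "1 - Qv v = 1 / Dv v" unfolding Qv_def Q_eq by simp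

lemma Qv_lt: "Qv v < 1"
  using Qv_eq[of v] Dv_pos[of v] by (smt (verit) divide_pos_pos)

lemma xlnx_eq: "xlnx t = t * ln t" by (simp add: xlnx_def)

lemma gv_le_Bv:
  assumes x: "x \<in> FM V E" and v: "v \<in> V"
  shows "gv x v \<le> Bv x v"
proof -
  have p0: "\<forall>e\<in>inc_edges E v. 0 \<le> x e" using x by (auto simp: FM_def inc_edges_def)
  have q0: "\<forall>e\<in>inc_edges E v. 0 < xs e" using xs_pos by (auto simp: inc_edges_def)
  have ps: "sum x (inc_edges E v) \<le> 1" using x v by (auto simp: FM_def)
  have qs: "sum xs (inc_edges E v) < 1" using Qv_lt[of v] unfolding Qv_def .
  note K = KL_vertex[OF fin_inc p0 q0 ps qs]
  show ?thesis unfolding gv_def Bv_def Qv_def xlnx_eq using K by (simp add: algebra_simps)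
qed

definition "cc v e = (1/2)*(ln z - ln (xs e) - ln (1 - xs e)) + ln (1 - Qv v)"
definition "CC v = (1/2)*(\<Sum>e\<in>inc_edges E v. ln (1 - xs e)) - ln (1 - Qv v)"

lemma Bv_affine: "Bv x v = CC v + (\<Sum>e\<in>inc_edges E v. x e * cc v e)"
  unfolding Bv_def CC_def cc_def
  by (simp add: sum.distrib sum_subtractf sum_distrib_left sum_distrib_right algebra_simps)

lemma cc_cancel:
  assumes "{u,w} \<in> E" "u \<noteq> w"
  shows "cc u {u,w} + cc w {u,w} = 0"
proof -
  have wu: "w \<in> N u" "u \<in> N w" using assms nbrs_E by (auto simp: insert_commute)
  define P where "P = Y (u,w) * Y (w,u)"
  have Pp: "0 < P" unfolding P_def using Y_pos by simp
  have zP: "0 < z + P" using Pp zp by simp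
  have x1: "xs {u,w} = P / (z + P)" unfolding P_def using xs_edge[OF assms(1)] .
  have x2: "1 - P / (z + P) = z / (z + P)" using zP by (simp add: field_simps)
  have d1: "1 - Qv u = Y (u,w) / (z + P)"
  proof -
    have "Y (u,w) * Dv u = z + P" using YD[OF wu(1)] unfolding P_def .
    thus ?thesis unfolding Qv_eq using Dv_pos[of u] zP by (simp add: field_simps)
  qed
  have d2: "1 - Qv w = Y (w,u) / (z + P)"
  proof -
    have "Y (w,u) * Dv w = z + P" using YD[OF wu(2)] unfolding P_def by (simp add: mult.commute)
    thus ?thesis unfolding Qv_eq using Dv_pos[of w] zP by (simp add: field_simps)
  qed
  have c: "{w,u} = {u,w}" by (simp add: insert_commute)
  have Yp: "0 < Y (u,w)" "0 < Y (w,u)" using Y_pos by auto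
  have "cc u {u,w} + cc w {u,w} = ln z - ln (xs {u,w}) - ln (1 - xs {u,w}) + ln (1 - Qv u) + ln (1 - Qv w)"
    unfolding cc_def by simp
  also have "\<dots> = ln z - (ln P - ln (z+P)) - (ln z - ln (z+P)) + (ln (Y (u,w)) - ln (z+P)) + (ln (Y (w,u)) - ln (z+P))"
    unfolding x1 d1 d2 x2 using Pp zP zp Yp by (simp add: ln_divide_pos)
  also have "\<dots> = ln (Y (u,w)) + ln (Y (w,u)) - ln P" by simp
  also have "\<dots> = 0" unfolding P_def using Yp by (simp add: ln_mult_pos)
  finally show ?thesis .
qed

lemma sum_Bv: "(\<Sum>v\<in>V. Bv x v) = (\<Sum>v\<in>V. CC v)"
proof -
  have "(\<Sum>v\<in>V. \<Sum>e\<in>inc_edges E v. x e * cc v e) = (\<Sum>e\<in>E. \<Sum>v\<in>e. x e * cc v e)"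
    by (rule double_count)
  also have "\<dots> = (\<Sum>e\<in>E. 0)"
  proof (rule sum.cong)
    fix e assume e: "e \<in> E"
    obtain u w where uw: "e = {u,w}" "u \<noteq> w" using edge_two[OF e] by blast
    have "(\<Sum>v\<in>e. x e * cc v e) = x e * (cc u {u,w} + cc w {u,w})"
      unfolding uw using uw(2) by (simp add: algebra_simps)
    also have "\<dots> = 0" using cc_cancel[of u w] e uw by simp
    finally show "(\<Sum>v\<in>e. x e * cc v e) = 0" .
  qed simp
  finally have "(\<Sum>v\<in>V. \<Sum>e\<in>inc_edges E v. x e * cc v e) = 0" by simp
  thus ?thesis unfolding Bv_affine by (simp add: sum.distrib)
qed

lemma gv_xs: "gv xs v = Bv xs v"
  unfolding gv_def Bv_def Qv_def xlnx_eq
  by (simp add: sum.distrib sum_subtractf sum_distrib_left algebra_simps)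

lemma xs_FM: "xs \<in> FM V E"
  unfolding FM_def using xs_pos Qv_lt unfolding Qv_def by (auto intro: less_imp_le)

lemma main: "(SUP x \<in> FM V E. PhiB V E x z) = PhiB V E xs z"
proof -
  have le: "\<And>x. x \<in> FM V E \<Longrightarrow> PhiB V E x z \<le> PhiB V E xs z"
  proof -
    fix x assume x: "x \<in> FM V E"
    have "PhiB V E x z = (\<Sum>v\<in>V. gv x v)" by (rule Phi_split)
    also have "\<dots> \<le> (\<Sum>v\<in>V. Bv x v)" by (rule sum_mono) (rule gv_le_Bv[OF x])
    also have "\<dots> = (\<Sum>v\<in>V. Bv xs v)" unfolding sum_Bv ..
    also have "\<dots> = (\<Sum>v\<in>V. gv xs v)" by (simp add: gv_xs)
    also have "\<dots> = PhiB V E xs z" by (rule Phi_split[symmetric])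
    finally show "PhiB V E x z \<le> PhiB V E xs z" .
  qed
  show ?thesis
    by (rule cSup_eq_maximum) (use xs_FM le in auto)
qed

end


theorem proposition5:
  fixes V :: "'a set" and E :: "'a set set" and z :: real
  assumes "simple_graph V E" and "z > 0"
  shows "(SUP x \<in> FM V E. PhiB V E x z) = PhiB V E (labpx E z) z"
proof -
  interpret gr V E z using assms by unfold_locales
  show ?thesis by (rule main)
qed

end
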